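(* Let $S$ be simple random walk on $\mathbb{Z}$ started at $0$ and set $P^t(0,z)=P[S_{2t}=2z]$ for $t\ge1$, $z\ge0$. Then for every $m\ge0$ and every choice of distinct positive integers $t_0,\dots,t_m$, the $(m+1)\times(m+1)$ matrix $\big(P^{t_i}(0,j)\big)_{0\le i,j\le m}$ is non-singular. In particular, for any $r\ge m+1$, every $(m+1)\times(m+1)$ square submatrix of $\big(P^{t}(0,j)\big)_{1\le t\le r,\,0\le j\le m}$ is non-singular. *)

theory Defs
  imports "HOL-Probability.Probability" "Jordan_Normal_Form.Determinant" "Jordan_Normal_Form.DL_Submatrix"
begin

fun srw :: "nat \<Rightarrow> int pmf" where
  "srw 0 = return_pmf 0"
| "srw (Suc n) = bind_pmf (srw n) (\<lambda>x. map_pmf (\<lambda>s. x + s) (pmf_of_set {-1, 1}))"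

definition Pt :: "nat \<Rightarrow> nat \<Rightarrow> real" where
  "Pt t z = pmf (srw (2 * t)) (2 * int z)"

end

theory Submission
  imports Defs
begin

lemma srw_Suc: "srw (Suc n) = bind_pmf (pmf_of_set {-1,1::int}) (\<lambda>s. map_pmf (\<lambda>x. x + s) (srw n))"
  by (simp add: map_pmf_def bind_return_pmf bind_commute_pmf[of "srw n"] add.commute)

lemma pmf_srw_Suc: "pmf (srw (Suc n)) y = (pmf (srw n) (y+1) + pmf (srw n) (y - 1)) / 2"
proof -
  have inj: "inj (\<lambda>x::int. x + s)" for s by (auto intro: injI)
  have m: "pmf (map_pmf (\<lambda>x. x + s) (srw n)) y = pmf (srw n) (y - s)" for s
    using pmf_map_inj'[OF inj, of s "srw n" "y - s"] by simp
  show ?thesis unfolding srw_Suc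
    by (subst pmf_bind_pmf_of_set) (auto simp: m)
qed

lemma pmf_srw: "pmf (srw n) x = (if even (x + int n) \<and> - int n \<le> x then real (n choose nat ((x + int n) div 2)) / 2^n else 0)"
proof (induction n arbitrary: x)
  case 0
  show ?case
  proof (cases "x = 0")
    case False
    then have "\<not> (even x \<and> 0 \<le> x) \<or> x div 2 > 0" by presburger
    then show ?thesis using False by (auto simp: pmf_return indicator_def)
  qed (simp add: pmf_return)
next
  case (Suc n)
  show ?case
  proof (cases "even (x + int (Suc n)) \<and> - int (Suc n) \<le> x")
    case True
    then obtain k where k: "x + int (Suc n) = 2 * int k" 
    proof -
      from True have "even (x + int (Suc n))" by blast
      then obtain j where j: "x + int (Suc n) = 2 * j" by (rule evenE)
      with True have "j \<ge> 0" by linarith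
      with j have "x + int (Suc n) = 2 * int (nat j)" by simp
      then show ?thesis by (rule that)
    qed
    have a: "nat ((x + int (Suc n)) div 2) = k" using k by simp
    have b: "nat ((x + 1 + int n) div 2) = k" using k by simp
    have c1: "even (x + 1 + int n) \<and> - int n \<le> x + 1" using k by presburger
    have "pmf (srw n) (x+1) = real (n choose k) / 2^n" using Suc.IH[of "x+1"] c1 b by simp
    moreover have "pmf (srw n) (x - 1) = (if k = 0 then 0 else real (n choose (k - 1)) / 2^n)"
    proof (cases k)
      case 0
      then have "\<not> (- int n \<le> x - 1)" using k by simp
      then show ?thesis using Suc.IH[of "x - 1"] 0 by simp
    next
      case (Suc k') 
      have "nat ((x - 1 + int n) div 2) = k'" using k Suc by simp
      moreover have "even (x - 1 + int n) \<and> - int n \<le> x - 1" using k Suc by presburger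
      ultimately show ?thesis using Suc.IH[of "x - 1"] Suc by simp
    qed
    ultimately show ?thesis unfolding pmf_srw_Suc using True a
      by (cases k) (auto simp: field_simps)
  next
    case False
    then have "pmf (srw n) (x+1) = 0" "pmf (srw n) (x-1) = 0" using Suc.IH by auto
    then show ?thesis unfolding pmf_srw_Suc if_not_P[OF False] by simp
  qed
qed

lemma Pt_eq: "Pt t j = real ((2*t) choose (t + j)) / 2^(2*t)"
proof -
  have "nat ((2 * int j + int (2 * t)) div 2) = t + j" by simp
  then show ?thesis unfolding Pt_def pmf_srw by simp
qed

lemma binom_step: "real (n choose Suc k) * real (Suc k) = real (n choose k) * real (n - k)"
proof -
  have "Suc k * (n choose Suc k) = n * ((n - 1) choose k)" by (rule binomial_absorption)
  also have "\<dots> = (n - k) * (n choose k)" by (rule binomial_absorb_comp[symmetric])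
  finally have "(n choose Suc k) * Suc k = (n choose k) * (n - k)" by (simp add: mult.commute)
  then show ?thesis by (metis of_nat_mult)
qed

lemma binom_prod: "real ((2*t) choose (t+j)) * (\<Prod>l\<in>{1..j}. real t + real l) = real ((2*t) choose t) * (\<Prod>l<j. real t - real l)"
proof (induction j)
  case 0
  then show ?case by simp
next
  case (Suc j)
  have st: "real ((2*t) choose Suc (t+j)) * real (Suc (t+j)) = real ((2*t) choose (t+j)) * (real t - real j)"
  proof (cases "j \<le> t")
    case True
    then have "real (2*t - (t+j)) = real t - real j" by simp
    then show ?thesis using binom_step[of "2*t" "t+j"] by simp
  next
    case False
    then have "(2*t) choose (t+j) = 0" "(2*t) choose Suc (t+j) = 0" by simp_all
    then show ?thesis by (simp only: of_nat_0 mult_zero_left)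
  qed
  have "real ((2*t) choose (t + Suc j)) * (\<Prod>l\<in>{1..Suc j}. real t + real l)
      = (real ((2*t) choose Suc (t+j)) * real (Suc (t+j))) * (\<Prod>l\<in>{1..j}. real t + real l)"
    by (simp add: prod.cl_ivl_Suc algebra_simps)
  also have "\<dots> = (real t - real j) * (real ((2*t) choose (t+j)) * (\<Prod>l\<in>{1..j}. real t + real l))"
    unfolding st by (simp add: algebra_simps)
  also have "\<dots> = real ((2*t) choose t) * (\<Prod>l<Suc j. real t - real l)"
    unfolding Suc.IH by (simp add: algebra_simps)
  finally show ?case .
qed

definition fpoly :: "nat \<Rightarrow> nat \<Rightarrow> real poly" where
  "fpoly m j = (\<Prod>l<j. [:- of_nat l, 1:]) * (\<Prod>l\<in>{Suc j..m}. [:of_nat l, 1:])"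

lemma poly_fpoly: "poly (fpoly m j) x = (\<Prod>l<j. x - real l) * (\<Prod>l\<in>{Suc j..m}. x + real l)"
  by (simp add: fpoly_def poly_prod add.commute)

lemma degree_fpoly: "j \<le> m \<Longrightarrow> degree (fpoly m j) \<le> m"
proof -
  assume "j \<le> m"
  have "degree (\<Prod>l<j. [:- of_nat l, 1::real:]) \<le> j"
    using degree_prod_sum_le[of "{..<j}" "\<lambda>l. [:- of_nat l, 1::real:]"] by simp
  moreover have "degree (\<Prod>l\<in>{Suc j..m}. [:of_nat l, 1::real:]) \<le> m - j"
    using degree_prod_sum_le[of "{Suc j..m}" "\<lambda>l. [:of_nat l, 1::real:]"] by simp
  moreover have "degree (fpoly m j) \<le> degree (\<Prod>l<j. [:- of_nat l, 1::real:]) + degree (\<Prod>l\<in>{Suc j..m}. [:of_nat l, 1::real:])"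
    unfolding fpoly_def by (rule degree_mult_le)
  ultimately show ?thesis using \<open>j \<le> m\<close> by linarith
qed

lemma fpoly_at_Pt:
  assumes "j \<le> m"
  shows "real ((2*t) choose (t+j)) * (\<Prod>l\<in>{1..m}. real t + real l) = real ((2*t) choose t) * poly (fpoly m j) (real t)"
proof -
  have "{1..m} = {1..j} \<union> {Suc j..m}" using assms by auto
  then have "(\<Prod>l\<in>{1..m}. real t + real l) = (\<Prod>l\<in>{1..j}. real t + real l) * (\<Prod>l\<in>{Suc j..m}. real t + real l)"
    by (simp add: prod.union_disjoint ivl_disj_int)
  then show ?thesis unfolding poly_fpoly using binom_prod[of t j]
    by (metis (no_types, lifting) mult.assoc)
qed


lemma key:
  assumes inj: "inj_on t {0..m}"
    and eqs: "\<And>i. i \<le> m \<Longrightarrow> (\<Sum>j\<in>{0..<Suc m}. Pt (t i) j * c j) = 0"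
  shows "\<And>j. j \<le> m \<Longrightarrow> c j = 0"
proof -
  define g where "g = (\<Sum>j\<in>{0..<Suc m}. Polynomial.smult (c j) (fpoly m j))"
  have pg: "poly g x = (\<Sum>j\<in>{0..<Suc m}. c j * poly (fpoly m j) x)" for x
    unfolding g_def by (simp add: poly_sum)
  have dg: "degree g \<le> m" unfolding g_def
    by (rule degree_sum_le) (auto intro: order_trans[OF degree_smult_le] degree_fpoly)
  have roots: "poly g (real (t i)) = 0" if "i \<le> m" for i
  proof -
    let ?t = "t i"
    have "(\<Sum>j\<in>{0..<Suc m}. real ((2*?t) choose (?t + j)) * c j) = 0"
      using eqs[OF that] unfolding Pt_eq
      by (simp add: sum_divide_distrib[symmetric])
    then have "(\<Sum>j\<in>{0..<Suc m}. real ((2*?t) choose (?t + j)) * c j) * (\<Prod>l\<in>{1..m}. real ?t + real l) = 0"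
      by simp
    moreover have "(\<Sum>j\<in>{0..<Suc m}. c j * (real ((2*?t) choose (?t + j)) * (\<Prod>l\<in>{1..m}. real ?t + real l)))
       = (\<Sum>j\<in>{0..<Suc m}. real ((2*?t) choose (?t + j)) * c j) * (\<Prod>l\<in>{1..m}. real ?t + real l)"
      unfolding sum_distrib_right by (rule sum.cong) (simp_all add: mult_ac)
    ultimately have "(\<Sum>j\<in>{0..<Suc m}. c j * (real ((2*?t) choose (?t + j)) * (\<Prod>l\<in>{1..m}. real ?t + real l))) = 0"
      by simp
    then have "(\<Sum>j\<in>{0..<Suc m}. c j * (real ((2*?t) choose ?t) * poly (fpoly m j) (real ?t))) = 0"
    proof -
      have "c j * (real ((2*?t) choose (?t + j)) * (\<Prod>l\<in>{1..m}. real ?t + real l)) = c j * (real ((2*?t) choose ?t) * poly (fpoly m j) (real ?t))"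
        if "j \<in> {0..<Suc m}" for j using that fpoly_at_Pt[of j m ?t] by simp
      then have "(\<Sum>j\<in>{0..<Suc m}. c j * (real ((2*?t) choose (?t + j)) * (\<Prod>l\<in>{1..m}. real ?t + real l)))
          = (\<Sum>j\<in>{0..<Suc m}. c j * (real ((2*?t) choose ?t) * poly (fpoly m j) (real ?t)))"
        by (rule sum.cong[OF refl])
      then show ?thesis using \<open>(\<Sum>j\<in>{0..<Suc m}. c j * (real ((2*?t) choose (?t + j)) * (\<Prod>l\<in>{1..m}. real ?t + real l))) = 0\<close>
        by simp
    qed
    then have "real ((2*?t) choose ?t) * poly g (real ?t) = 0"
    proof -
      have "(\<Sum>j\<in>{0..<Suc m}. real ((2*?t) choose ?t) * (c j * poly (fpoly m j) (real ?t)))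
          = (\<Sum>j\<in>{0..<Suc m}. c j * (real ((2*?t) choose ?t) * poly (fpoly m j) (real ?t)))"
        by (rule sum.cong[OF refl]) (simp add: mult.left_commute)
      with \<open>(\<Sum>j\<in>{0..<Suc m}. c j * (real ((2*?t) choose ?t) * poly (fpoly m j) (real ?t))) = 0\<close>
      show ?thesis unfolding pg sum_distrib_left by simp
    qed
    moreover have "real ((2*?t) choose ?t) \<noteq> 0" by simp
    ultimately show ?thesis by simp
  qed
  have g0: "g = 0"
  proof (rule ccontr)
    assume "g \<noteq> 0"
    have "(\<lambda>i. real (t i)) ` {0..m} \<subseteq> {x. poly g x = 0}" using roots by auto
    moreover have "card ((\<lambda>i. real (t i)) ` {0..m}) = Suc m"
      using inj by (subst card_image) (auto simp: inj_on_def)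
    ultimately have "Suc m \<le> card {x. poly g x = 0}"
      using card_mono[OF poly_roots_finite[OF \<open>g \<noteq> 0\<close>]] by metis
    also have "\<dots> \<le> degree g" by (rule card_poly_roots_bound[OF \<open>g \<noteq> 0\<close>])
    finally show False using dg by simp
  qed
  have cz: "c (m - d) = 0" if "d \<le> m" for d
    using that
  proof (induction d rule: less_induct)
    case (less d)
    define k where "k = m - d"
    have km: "k \<le> m" unfolding k_def by simp
    have IH: "c j = 0" if "k < j" "j \<le> m" for j
      using less.IH[of "m - j"] that unfolding k_def by simp
    have "0 = poly g (- real k)" using g0 by simp
    also have "\<dots> = (\<Sum>j\<in>{0..<Suc m}. c j * poly (fpoly m j) (- real k))" by (rule pg)
    also have "\<dots> = c k * poly (fpoly m k) (- real k) + (\<Sum>j\<in>{0..<Suc m} - {k}. c j * poly (fpoly m j) (- real k))"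
      by (rule sum.remove) (use km in auto)
    also have "(\<Sum>j\<in>{0..<Suc m} - {k}. c j * poly (fpoly m j) (- real k)) = 0"
    proof (rule sum.neutral, rule ballI)
      fix j assume j: "j \<in> {0..<Suc m} - {k}"
      show "c j * poly (fpoly m j) (- real k) = 0"
      proof (cases "j < k")
        case True
        then have "k \<in> {Suc j..m}" using km by auto
        then have "(\<Prod>l\<in>{Suc j..m}. - real k + real l) = 0"
          by (subst prod_zero_iff) auto
        then show ?thesis unfolding poly_fpoly by simp
      next
        case False
        then show ?thesis using IH[of j] j by auto
      qed
    qed
    finally have "c k * poly (fpoly m k) (- real k) = 0" by simp
    moreover have "poly (fpoly m k) (- real k) \<noteq> 0"
      unfolding poly_fpoly by auto
    ultimately show ?case unfolding k_def by simp
  qed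
  show "\<And>j. j \<le> m \<Longrightarrow> c j = 0"
    by (metis cz diff_diff_cancel diff_le_self)
qed


lemma part1:
  assumes "inj_on t {0..m}"
  shows "det (mat (Suc m) (Suc m) (\<lambda>(i, j). Pt (t i) j)) \<noteq> 0"
proof
  let ?M = "mat (Suc m) (Suc m) (\<lambda>(i, j). Pt (t i) j)"
  assume "det ?M = 0"
  then obtain v where v: "v \<in> carrier_vec (Suc m)" "v \<noteq> 0\<^sub>v (Suc m)" "?M *\<^sub>v v = 0\<^sub>v (Suc m)"
    using det_0_iff_vec_prod_zero_field[of ?M "Suc m"] by auto
  have "(\<Sum>j\<in>{0..<Suc m}. Pt (t i) j * v $ j) = 0" if "i \<le> m" for i
  proof -
    have "(?M *\<^sub>v v) $ i = 0" using v(3) that by simp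
    then show ?thesis using v(1) that by (simp add: scalar_prod_def)
  qed
  then have "v $ j = 0" if "j \<le> m" for j
    using key[OF assms, of "\<lambda>j. v $ j"] that by blast
  then have "v = 0\<^sub>v (Suc m)" using v(1) by (intro eq_vecI) auto
  then show False using v(2) by simp
qed

lemma pick_lt: "j < Suc m \<Longrightarrow> pick {..<Suc m} j = j"
proof (induction j)
  case 0
  then show ?case by (simp add: Least_eq_0)
next
  case (Suc j)
  then show ?case by (auto intro!: Least_equality)
qed

theorem lemma3p2:
  shows "(\<forall>(m::nat) (t::nat \<Rightarrow> nat).
            (\<forall>i\<le>m. 0 < t i) \<and> inj_on t {0..m} \<longrightarrow>
            det (mat (Suc m) (Suc m) (\<lambda>(i, j). Pt (t i) j)) \<noteq> 0)
       \<and> (\<forall>(m::nat) (r::nat) I J. m + 1 \<le> r \<longrightarrow>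
            I \<subseteq> {..<r} \<longrightarrow> J \<subseteq> {..<Suc m} \<longrightarrow>
            card I = Suc m \<longrightarrow> card J = Suc m \<longrightarrow>
            det (submatrix (mat r (Suc m) (\<lambda>(i, j). Pt (i + 1) j)) I J) \<noteq> 0)"
proof (intro conjI allI impI)
  fix m :: nat and t :: "nat \<Rightarrow> nat" assume "(\<forall>i\<le>m. 0 < t i) \<and> inj_on t {0..m}"
  then show "det (mat (Suc m) (Suc m) (\<lambda>(i, j). Pt (t i) j)) \<noteq> 0" using part1 by blast
next
  fix m r :: nat and I J :: "nat set"
  assume h: "m + 1 \<le> r" "I \<subseteq> {..<r}" "J \<subseteq> {..<Suc m}" "card I = Suc m" "card J = Suc m"
  have J: "J = {..<Suc m}" using h(3,5) by (metis card_lessThan card_subset_eq finite_lessThan)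
  have cI: "{i. i < r \<and> i \<in> I} = I" using h(2) by auto
  have cJ: "{j. j < Suc m \<and> j \<in> J} = J" using h(3) by auto
  let ?t = "\<lambda>i. pick I i + 1"
  have eq: "submatrix (mat r (Suc m) (\<lambda>(i, j). Pt (i + 1) j)) I J = mat (Suc m) (Suc m) (\<lambda>(i, j). Pt (?t i) j)"
  proof (rule eq_matI)
    fix i j assume ij: "i < dim_row (mat (Suc m) (Suc m) (\<lambda>(i, j). Pt (?t i) j))" "j < dim_col (mat (Suc m) (Suc m) (\<lambda>(i, j). Pt (?t i) j))"
    then have "pick I i < r" using pick_le[of i r I] cI h(4) by auto
    moreover have "pick J j = j" using J ij pick_lt by auto
    ultimately show "submatrix (mat r (Suc m) (\<lambda>(i, j). Pt (i + 1) j)) I J $$ (i, j) = mat (Suc m) (Suc m) (\<lambda>(i, j). Pt (?t i) j) $$ (i, j)"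
      using ij by (simp add: submatrix_def cI cJ h(4,5))
  qed (simp_all add: submatrix_def cI cJ h(4,5))
  have "inj_on ?t {0..m}"
  proof (rule inj_onI)
    fix a b assume "a \<in> {0..m}" "b \<in> {0..m}" "?t a = ?t b"
    then show "a = b" using pick_mono[of _ I] h(4)
      by (metis Suc_eq_plus1 add_right_cancel atLeastAtMost_iff le_imp_less_Suc linorder_neqE_nat less_not_refl)
  qed
  then show "det (submatrix (mat r (Suc m) (\<lambda>(i, j). Pt (i + 1) j)) I J) \<noteq> 0"
    unfolding eq by (rule part1)
qed

end
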